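(* Let $\mathcal{A}>0$ be rational and let $t_1,t_2\in T_\mathcal{A}\cap(0,1)$. Define \[t_3=\left(\frac{\sqrt{t_2(1-t_1^2)}+\sqrt{t_1(1-t_2^2)}}{1+t_1t_2}\right)^2,\] with positive real square roots. Then $t_3$ is rational, $t_3\in T_\mathcal{A}$, and both $(1+t_1)(1+t_2)(1+t_3)$ and $(1-t_1)(1-t_2)(1-t_3)$ are squares of rational numbers.
   Context: $T_\mathcal{A}=\{t\in\mathbb Q:\ t(1-t^2)=\mathcal{A}r^2 \text{ for some } r\in\mathbb Q\}$. An element $t\in T_\mathcal{A}\cap(0,1)$ is the parameter of the rational right triangle with sides $(1-t^2,2t,1+t^2)$, whose area $t(1-t^2)$ equals $\mathcal{A}$ times a rational square. *)

theory Defs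
  imports Complex_Main
begin

definition T_set :: "rat \<Rightarrow> rat set" where
  "T_set A = {t. \<exists>r::rat. t * (1 - t^2) = A * r^2}"

end

theory Submission
  imports Defs
begin

lemma key:
  fixes A t1 t2 r1 r2 :: rat
  assumes e1: "t1*(1-t1^2) = A*r1^2" and e2: "t2*(1-t2^2)=A*r2^2"
    and p1: "0<t1" and p2: "0<t2"
  shows "A*(t2*r1+t1*r2)^2/(t1*t2*(1+t1*t2)^2) = (t2*(1-t1^2)+t1*(1-t2^2)+2*(A*r1*r2))/(1+t1*t2)^2"
    and "(1+t1)*(1+t2)*(1+ A*(t2*r1+t1*r2)^2/(t1*t2*(1+t1*t2)^2)) = (((1+t1)*(1+t2)+A*r1*r2)/(1+t1*t2))^2"
    and "(1-t1)*(1-t2)*(1- A*(t2*r1+t1*r2)^2/(t1*t2*(1+t1*t2)^2)) = (((1-t1)*(1-t2)-A*r1*r2)/(1+t1*t2))^2"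
proof -
  have D: "1+t1*t2 > 0" using p1 p2 by (simp add: add_pos_pos)
  have t12: "t1*t2 > 0" using p1 p2 by simp
  have s: "A*(t2*r1+t1*r2)^2 = t2^2*(A*r1^2) + t1^2*(A*r2^2) + 2*t1*t2*(A*r1*r2)"
    by (simp add: algebra_simps power2_eq_square)
  also have "\<dots> = t1*t2*(t2*(1-t1^2)+t1*(1-t2^2)+2*(A*r1*r2))"
    unfolding e1[symmetric] e2[symmetric] by (simp add: algebra_simps power2_eq_square)
  finally have X: "A*(t2*r1+t1*r2)^2 = t1*t2*(t2*(1-t1^2)+t1*(1-t2^2)+2*(A*r1*r2))" .
  have w2: "(A*r1*r2)^2 = (t1*(1-t1^2))*(t2*(1-t2^2))" unfolding e1 e2 by (simp add: algebra_simps power2_eq_square)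
  show T: "A*(t2*r1+t1*r2)^2/(t1*t2*(1+t1*t2)^2) = (t2*(1-t1^2)+t1*(1-t2^2)+2*(A*r1*r2))/(1+t1*t2)^2"
    unfolding X using p1 p2 by simp
  show "(1+t1)*(1+t2)*(1+ A*(t2*r1+t1*r2)^2/(t1*t2*(1+t1*t2)^2)) = (((1+t1)*(1+t2)+A*r1*r2)/(1+t1*t2))^2"
    unfolding T using D w2 by (simp add: field_simps) algebra
  show "(1-t1)*(1-t2)*(1- A*(t2*r1+t1*r2)^2/(t1*t2*(1+t1*t2)^2)) = (((1-t1)*(1-t2)-A*r1*r2)/(1+t1*t2))^2"
    unfolding T using D w2 by (simp add: field_simps) algebra
qed

theorem mainTheorem7:
  fixes A t1 t2 :: rat
  assumes hA: "A > 0"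
    and h1: "t1 \<in> T_set A" and h1i: "0 < t1" "t1 < 1"
    and h2: "t2 \<in> T_set A" and h2i: "0 < t2" "t2 < 1"
  defines "t3r \<equiv> ((sqrt (of_rat t2 * (1 - (of_rat t1)^2)) + sqrt (of_rat t1 * (1 - (of_rat t2)^2)))
                    / (1 + of_rat t1 * of_rat t2))^2"
  shows "\<exists>t3::rat. of_rat t3 = t3r \<and> t3 \<in> T_set A
           \<and> (\<exists>u::rat. (1 + t1) * (1 + t2) * (1 + t3) = u^2)
           \<and> (\<exists>v::rat. (1 - t1) * (1 - t2) * (1 - t3) = v^2)"
proof -
  obtain r1' where e1': "t1*(1-t1^2) = A*r1'^2" using h1 unfolding T_set_def by blast
  obtain r2' where e2': "t2*(1-t2^2) = A*r2'^2" using h2 unfolding T_set_def by blast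
  define r1 where "r1 = \<bar>r1'\<bar>"
  define r2 where "r2 = \<bar>r2'\<bar>"
  have e1: "t1*(1-t1^2) = A*r1^2" using e1' unfolding r1_def by simp
  have e2: "t2*(1-t2^2) = A*r2^2" using e2' unfolding r2_def by simp
  have r1p: "r1 \<ge> 0" "r2 \<ge> 0" unfolding r1_def r2_def by auto
  have q1: "t1^2 < 1" using h1i by (simp add: power_less_one_iff abs_square_less_1)
  have q2: "t2^2 < 1" using h2i by (simp add: abs_square_less_1)
  have r1n: "r1 \<noteq> 0" using e1 h1i q1 by (auto simp: mult_pos_pos)
  have r2n: "r2 \<noteq> 0" using e2 h2i q2 by (auto simp: mult_pos_pos)
  define D where "D = 1 + t1*t2"
  define w where "w = A*r1*r2"
  define t3 where "t3 = A*(t2*r1+t1*r2)^2/(t1*t2*(1+t1*t2)^2)"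
  define u where "u = ((1+t1)*(1+t2)+A*r1*r2)/(1+t1*t2)"
  define v where "v = ((1-t1)*(1-t2)-A*r1*r2)/(1+t1*t2)"
  have K1: "t3 = (t2*(1-t1^2)+t1*(1-t2^2)+2*(A*r1*r2))/(1+t1*t2)^2"
    unfolding t3_def using key(1)[OF e1 e2 h1i(1) h2i(1)] .
  have K2: "(1+t1)*(1+t2)*(1+t3) = u^2"
    unfolding t3_def u_def using key(2)[OF e1 e2 h1i(1) h2i(1)] .
  have K3: "(1-t1)*(1-t2)*(1-t3) = v^2"
    unfolding t3_def v_def using key(3)[OF e1 e2 h1i(1) h2i(1)] .
  have Dp: "1+t1*t2 > 0" using h1i h2i by (simp add: add_pos_pos)
  have w2: "(t1*(1-t1^2))*(t2*(1-t2^2)) = (A*r1*r2)^2" unfolding e1 e2 by (simp add: algebra_simps power2_eq_square)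
  have T3: "t3*(1-t3^2) = A*((t2*r1+t1*r2)*u*v/(A*r1*r2*(1+t1*t2)))^2"
  proof -
    have "(1-t1^2)*(1-t2^2)*(t3*(1-t3^2)) = t3 * (((1+t1)*(1+t2)*(1+t3))*((1-t1)*(1-t2)*(1-t3)))"
      by (simp add: algebra_simps power2_eq_square)
    also have "\<dots> = t3*u^2*v^2" unfolding K2 K3 by simp
    finally have a: "(1-t1^2)*(1-t2^2)*(t3*(1-t3^2)) = t3*u^2*v^2" .
    have nz: "(1-t1^2)*(1-t2^2) \<noteq> 0" using q1 q2 by auto
    have "t3*(1-t3^2) = t3*u^2*v^2 / ((1-t1^2)*(1-t2^2))" using a nz by (simp add: field_simps)
    also have "\<dots> = A*(t2*r1+t1*r2)^2*u^2*v^2 / (t1*t2*(1-t1^2)*(1-t2^2)*(1+t1*t2)^2)"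
      unfolding t3_def by (simp add: field_simps)
    also have "t1*t2*(1-t1^2)*(1-t2^2) = (A*r1*r2)^2" using w2 by (simp add: algebra_simps)
    finally show ?thesis using hA r1n r2n Dp by (simp add: field_simps power2_eq_square)
  qed
  have real: "of_rat t3 = t3r"
  proof -
    let ?a = "sqrt (of_rat t2 * (1 - (of_rat t1)^2))"
    let ?b = "sqrt (of_rat t1 * (1 - (of_rat t2)^2))"
    have n1: "(of_rat t2 * (1 - (of_rat t1)^2)::real) = of_rat (t2*(1-t1^2))" by (simp add: of_rat_mult of_rat_diff of_rat_power)
    have n2: "(of_rat t1 * (1 - (of_rat t2)^2)::real) = of_rat (t1*(1-t2^2))" by (simp add: of_rat_mult of_rat_diff of_rat_power)
    have g1: "t2*(1-t1^2) \<ge> 0" using h2i q1 by simp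
    have g2: "t1*(1-t2^2) \<ge> 0" using h1i q2 by simp
    have a2: "?a^2 = of_rat (t2*(1-t1^2))" unfolding n1 using g1 by simp
    have b2: "?b^2 = of_rat (t1*(1-t2^2))" unfolding n2 using g2 by simp
    have wg: "A*r1*r2 \<ge> 0" using hA r1p by simp
    have ab: "?a * ?b = of_rat (A*r1*r2)"
    proof -
      have "?a * ?b = sqrt (of_rat ((t1*(1-t1^2))*(t2*(1-t2^2))))"
        unfolding n1 n2 real_sqrt_mult[symmetric] of_rat_mult by (simp add: algebra_simps)
      also have "\<dots> = sqrt ((of_rat (A*r1*r2))^2)" unfolding w2 by (simp add: of_rat_power)
      also have "\<dots> = of_rat (A*r1*r2)" using wg by simp
      finally show ?thesis .
    qed
    have "(?a+?b)^2 = ?a^2 + ?b^2 + 2*(?a*?b)" by (simp add: power2_eq_square algebra_simps)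
    also have "\<dots> = of_rat (t2*(1-t1^2)+t1*(1-t2^2)+2*(A*r1*r2))" unfolding a2 b2 ab by (simp add: of_rat_add of_rat_mult)
    finally have s: "(?a+?b)^2 = of_rat (t2*(1-t1^2)+t1*(1-t2^2)+2*(A*r1*r2))" .
    have d: "(1 + of_rat t1 * of_rat t2 :: real) = of_rat (1+t1*t2)" by (simp add: of_rat_add of_rat_mult)
    show ?thesis unfolding t3r_def power_divide s d K1 by (simp add: of_rat_divide of_rat_power)
  qed
  show ?thesis
    apply (rule exI[of _ t3])
    using real T3 K2 K3 unfolding T_set_def by blast
qed

end
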